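(* For every integer $n\ge 3$, let $t(n)$ denote the largest positive integer $k$ such that there exists a positive tribonacci sequence of length $k$ terminating at $n$. Then there are at most $561001$ positive tribonacci sequences of length $t(n)$ terminating at $n$.
   Context: A tribonacci sequence of length $k$ is a sequence of integers $\langle a_i\rangle_{i=1}^k$ such that $a_i=a_{i-1}+a_{i-2}+a_{i-3}$ for all $4\le i\le k$. It terminates at $a_k$. It is positive if $a_1,a_2,a_3>0$ (for length less than 3, all terms are required to be positive). For $n\ge 3$ the set of such $k$ is non-empty and bounded, so $t(n)$ is well defined. *)

theory Defs
  imports Main
begin

text \<open>A sequence a_1..a_k is represented by a list xs of length k, with a_i = xs ! (i-1).\<close>

definition is_tribonacci :: "int list \<Rightarrow> bool" where
  "is_tribonacci xs \<longleftrightarrow>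
     (\<forall>i. 3 \<le> i \<and> i < length xs \<longrightarrow> xs ! i = xs ! (i-1) + xs ! (i-2) + xs ! (i-3))"

definition is_positive_seq :: "int list \<Rightarrow> bool" where
  "is_positive_seq xs \<longleftrightarrow> (\<forall>i < min (length xs) 3. xs ! i > 0)"

definition terminates_at :: "int list \<Rightarrow> int \<Rightarrow> bool" where
  "terminates_at xs n \<longleftrightarrow> xs \<noteq> [] \<and> last xs = n"

definition pos_trib_ending :: "int \<Rightarrow> nat \<Rightarrow> int list set" where
  "pos_trib_ending n k = {xs. length xs = k \<and> is_tribonacci xs \<and> is_positive_seq xs \<and> terminates_at xs n}"

definition t :: "int \<Rightarrow> nat" where
  "t n = (GREATEST k. k > 0 \<and> pos_trib_ending n k \<noteq> {})"

end

theory Submission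
  imports Defs Complex_Main
begin


lemma rho_ex: "\<exists>x::real. x^3 = x^2+x+1 \<and> 1.83 < x \<and> x < 1.85"
proof -
  have "\<exists>x. 1.83 \<le> x \<and> x \<le> 1.85 \<and> (\<lambda>x::real. x^3 - x^2 - x - 1) x = 0"
    by (rule IVT') (auto intro!: continuous_intros simp: power_def)
  then obtain x :: real where "1.83 \<le> x" "x \<le> 1.85" "x^3 - x^2 - x - 1 = 0" by auto
  moreover have "x \<noteq> 1.83"
  proof
    assume "x = 1.83" with calculation(3) show False by (simp add: power3_eq_cube power2_eq_square)
  qed
  moreover have "x \<noteq> 1.85"
  proof
    assume "x = 1.85" with calculation(3) show False by (simp add: power3_eq_cube power2_eq_square)
  qed
  ultimately show ?thesis by (intro exI[of _ x]) auto
qed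

definition rho :: real where "rho = (SOME x. x^3 = x^2+x+1 \<and> 1.83 < x \<and> x < 1.85)"

lemma rho: "rho^3 = rho^2+rho+1" "1.83 < rho" "rho < 1.85"
  using someI_ex[OF rho_ex] unfolding rho_def[symmetric] by auto

definition PP :: real where "PP = rho^2 - rho - 1"

lemma PP_rho: "PP * rho = 1"
  unfolding PP_def using rho(1) by algebra

fun lf :: "real \<times> real \<times> real \<Rightarrow> real" where
  "lf (a,b,c) = a + (rho^2-rho)*b + rho*c"

fun qf :: "real \<times> real \<times> real \<Rightarrow> real" where
  "qf (a,b,c) = a^2 + PP*(PP+rho)*b^2 + PP*c^2 + (rho^2-rho-2*PP)*a*b + (1-rho)*a*c - PP*(1+rho)*b*c"

fun M :: "'a::plus \<times> 'a \<times> 'a \<Rightarrow> 'a \<times> 'a \<times> 'a" where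
  "M (a,b,c) = (b,c,a+b+c)"

lemma lf_M3: "lf (M (a,b,c)) = rho * lf (a,b,c)"
proof -
  have "lf (M (a,b,c)) = rho*a + (1+rho)*b + rho^2*c" by (simp add: algebra_simps power2_eq_square)
  also have "\<dots> = rho * lf (a,b,c)" using rho(1) by simp algebra
  finally show ?thesis .
qed

lemma qf_M3: "rho * qf (M (a,b,c)) = qf (a,b,c)"
  using rho(1) PP_def by simp algebra

lemma qf_shift: "qf (x + tt, y + tt*rho, tt*rho^2) = qf (x,y,0)"
  using rho(1) PP_def by simp algebra

lemma rho_sq: "3.34 < rho^2" "rho^2 < 3.43"
proof -
  have "1.83*1.83 < rho*rho" using rho by (intro mult_strict_mono) auto
  then show "3.34 < rho^2" by (simp add: power2_eq_square)
  have "rho*rho < 1.85*1.85" using rho by (intro mult_strict_mono) auto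
  then show "rho^2 < 3.43" by (simp add: power2_eq_square)
qed

lemma PP_bounds: "0.49 < PP" "PP < 0.6"
  using rho rho_sq unfolding PP_def by auto

lemma AB_bounds: "1.1 < PP*(PP+rho)" "PP*(PP+rho) < 1.5" "\<bar>rho^2-rho-2*PP\<bar> < 0.6"
proof -
  have "0.49 * 2.32 < PP*(PP+rho)" using PP_bounds rho by (intro mult_strict_mono) auto
  then show "1.1 < PP*(PP+rho)" by simp
  have "PP*(PP+rho) < 0.6 * 2.45" using PP_bounds rho by (intro mult_strict_mono) auto
  then show "PP*(PP+rho) < 1.5" by simp
  show "\<bar>rho^2-rho-2*PP\<bar> < 0.6" using PP_bounds rho rho_sq unfolding PP_def by auto
qed

lemma absxy: "2*\<bar>x*y\<bar> \<le> x^2 + (y::real)^2"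
proof -
  have "0 \<le> (\<bar>x\<bar> - \<bar>y\<bar>)^2" by simp
  then show ?thesis by (simp add: power2_eq_square algebra_simps abs_mult)
qed

lemma Bxy_gen: fixes B x y :: real assumes "\<bar>B\<bar> \<le> 0.6"
  shows "\<bar>B*x*y\<bar> \<le> 0.3*(x^2+y^2)"
proof -
  have "\<bar>B*x*y\<bar> = \<bar>B\<bar>*\<bar>x*y\<bar>" by (simp add: abs_mult)
  also have "\<dots> \<le> 0.6 * \<bar>x*y\<bar>" using assms by (intro mult_right_mono) auto
  finally have 1: "\<bar>B*x*y\<bar> \<le> 0.6 * \<bar>x*y\<bar>" .
  define p where "p = \<bar>B*x*y\<bar>"
  define q where "q = \<bar>x*y\<bar>"
  define s where "s = x^2"
  define r where "r = y^2"
  have "p \<le> 0.6*q" "2*q \<le> s + r" using 1 absxy[of x y] unfolding p_def q_def s_def r_def by auto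
  then have "p \<le> 0.3*(s+r)" unfolding distrib_left by linarith
  then show ?thesis unfolding p_def s_def r_def .
qed

lemma q2_gen: fixes A B x y :: real assumes "\<bar>B\<bar> \<le> 0.6" "1.1 \<le> A" "A \<le> 1.5"
  shows "(x^2+y^2)/2 \<le> x^2 + A*y^2 + B*x*y" "x^2 + A*y^2 + B*x*y \<le> 2*(x^2+y^2)"
proof -
  have 1: "\<bar>B*x*y\<bar> \<le> 0.3*(x^2+y^2)" by (rule Bxy_gen[OF assms(1)])
  have 2: "1.1*y^2 \<le> A*y^2" "A*y^2 \<le> 1.5*y^2" using assms by (intro mult_right_mono; simp)+
  define p where "p = B*x*y"
  define s where "s = x^2"
  define r where "r = y^2"
  define ar where "ar = A*y^2"
  have "\<bar>p\<bar> \<le> 0.3*(s+r)" "1.1*r \<le> ar" "ar \<le> 1.5*r" "0 \<le> s" "0 \<le> r"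
    using 1 2 unfolding p_def s_def r_def ar_def by auto
  then have "(s+r)/2 \<le> s + ar + p" "s + ar + p \<le> 2*(s+r)" unfolding distrib_left add_divide_distrib by linarith+
  then show "(x^2+y^2)/2 \<le> x^2 + A*y^2 + B*x*y" "x^2 + A*y^2 + B*x*y \<le> 2*(x^2+y^2)"
    unfolding p_def s_def r_def ar_def by auto
qed

lemma q2_lower: "(x^2+y^2)/2 \<le> qf (x,y,0)"
  using q2_gen(1)[of "rho^2-rho-2*PP" "PP*(PP+rho)" x y] AB_bounds by (simp add: algebra_simps)

lemma q2_upper: "qf (x,y,0) \<le> 2*(x^2+y^2)"
  using q2_gen(2)[of "rho^2-rho-2*PP" "PP*(PP+rho)" x y] AB_bounds by (simp add: algebra_simps)

lemma gen_bound:
  fixes l al be x y :: real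
  assumes "0 < l" "l \<le> al*x + be*y" "al^2 \<le> 225" "be^2 \<le> 225"
  shows "l^2 \<le> 1000 * qf (x,y,0)"
proof -
  have "l^2 \<le> (al*x+be*y)^2" using assms(1,2) by (intro power_mono) auto
  also have "\<dots> \<le> 2*(al^2*x^2) + 2*(be^2*y^2)"
  proof -
    have "0 \<le> (al*x-be*y)^2" by simp
    then show ?thesis by (simp add: power2_eq_square algebra_simps)
  qed
  also have "\<dots> \<le> 2*(225*x^2) + 2*(225*y^2)"
    using assms(3,4) by (intro add_mono mult_left_mono mult_right_mono) auto
  also have "\<dots> \<le> 1000 * qf (x,y,0)"
  proof -
    have "x^2+y^2 \<le> 2 * qf (x,y,0)" using q2_lower[of x y] by simp
    moreover have "0 \<le> x^2" "0 \<le> y^2" by simp_all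
    ultimately show ?thesis by linarith
  qed
  finally show ?thesis .
qed

definition LL :: real where "LL = 3 + 2*rho + rho^2"

lemma LL_bounds: "10 < LL" "LL < 10.2"
  using rho rho_sq unfolding LL_def by auto

lemma lf_shift: "lf (x + tt, y + tt*rho, tt*rho^2) = x + (rho^2-rho)*y + tt*LL"
  using rho(1) LL_def by simp algebra

lemma pos_lemma:
  fixes a b c :: real
  assumes l: "0 < lf (a,b,c)" and nonpos: "a \<le> 0 \<or> b \<le> 0 \<or> c \<le> 0"
  shows "(lf (a,b,c))^2 \<le> 1000 * qf (a,b,c)"
proof -
  define tt where "tt = c*PP^2"
  define x where "x = a - tt"
  define y where "y = b - tt*rho"
  have "PP^2*rho^2 = 1" using PP_rho by (metis power_mult_distrib power_one)
  then have ct: "c = tt*rho^2" unfolding tt_def by (metis mult.assoc mult.right_neutral)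
  have abc: "(a,b,c) = (x+tt, y+tt*rho, tt*rho^2)" using ct x_def y_def by simp
  have q: "qf (a,b,c) = qf (x,y,0)" unfolding abc by (rule qf_shift)
  have lfe: "lf (a,b,c) = x + (rho^2-rho)*y + tt*LL" unfolding abc by (rule lf_shift)
  have LLp: "0 < LL" using LL_bounds by simp
  have hr: "rho^2 - rho > 1.4" "rho^2 - rho < 1.7" using rho rho_sq by auto
  have sq1: "(rho^2-rho)^2 \<le> 225"
  proof -
    have "(rho^2-rho)^2 \<le> 2^2" using hr by (intro power_mono) auto
    then show ?thesis by simp
  qed
  from nonpos consider "a \<le> 0" | "b \<le> 0" | "c \<le> 0" by blast
  then show ?thesis
  proof cases
    case 1
    then have "tt \<le> -x" using x_def by simp
    then have "tt*LL \<le> (-x)*LL" using LLp by (intro mult_right_mono) auto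
    then have le: "lf (a,b,c) \<le> (1-LL)*x + (rho^2-rho)*y" using lfe by (simp add: algebra_simps)
    have "(1-LL)^2 \<le> 225"
    proof -
      have "(LL-1)^2 \<le> 10^2" using LL_bounds by (intro power_mono) auto
      then show ?thesis by (simp add: power2_commute)
    qed
    then show ?thesis using gen_bound[OF l le _ sq1] q by simp
  next
    case 2
    then have "tt*rho \<le> -y" using y_def by simp
    then have "tt*rho*PP \<le> (-y)*PP" using PP_bounds by (intro mult_right_mono) auto
    then have "tt \<le> -y*PP" using PP_rho by (simp add: mult.assoc mult.commute[of rho PP])
    then have "tt*LL \<le> (-y*PP)*LL" using LLp by (intro mult_right_mono) auto
    then have le: "lf (a,b,c) \<le> 1*x + (rho^2-rho-PP*LL)*y" using lfe by (simp add: algebra_simps)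
    have PL: "4.9 < PP*LL" "PP*LL < 6.2"
    proof -
      have "0.49*10 < PP*LL" using PP_bounds LL_bounds by (intro mult_strict_mono) auto
      then show "4.9 < PP*LL" by simp
      have "PP*LL < 0.6*10.2" using PP_bounds LL_bounds by (intro mult_strict_mono) auto
      then show "PP*LL < 6.2" by simp
    qed
    have sq2: "(rho^2-rho-PP*LL)^2 \<le> 225"
    proof -
      have "(PP*LL-(rho^2-rho))^2 \<le> 5^2" using hr PL by (intro power_mono) auto
      then show ?thesis by (simp add: power2_commute)
    qed
    show ?thesis using gen_bound[OF l le _ sq2] q by simp
  next
    case 3
    then have "tt \<le> 0" unfolding tt_def by (simp add: mult_nonpos_nonneg)
    then have "tt*LL \<le> 0" using LLp by (simp add: mult_nonpos_nonneg)
    then have le: "lf (a,b,c) \<le> 1*x + (rho^2-rho)*y" using lfe by simp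
    show ?thesis using gen_bound[OF l le _ sq1] q by simp
  qed
qed

lemma qf_le_lf:
  fixes a b c :: real
  assumes "0 \<le> a" "0 \<le> b" "0 \<le> c"
  shows "qf (a,b,c) \<le> (lf (a,b,c))^2"
proof -
  have e: "(lf (a,b,c))^2 - qf (a,b,c) = ((rho^2-rho)^2 - PP*(PP+rho))*b^2 + (rho^2 - PP)*c^2
     + (2*(rho^2-rho) - (rho^2-rho-2*PP))*(a*b) + (2*rho - (1-rho))*(a*c) + (2*rho*(rho^2-rho) + PP*(1+rho))*(b*c)"
    by (simp add: power2_eq_square algebra_simps)
  have hr: "rho^2 - rho > 1.4" using rho rho_sq by auto
  have c1: "(rho^2-rho)^2 - PP*(PP+rho) \<ge> 0"
  proof -
    have "1.4*1.4 \<le> (rho^2-rho)*(rho^2-rho)" using hr by (intro mult_mono) auto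
    then have "1.96 \<le> (rho^2-rho)^2" by (simp add: power2_eq_square)
    then show ?thesis using AB_bounds by simp
  qed
  have c2: "rho^2 - PP \<ge> 0" using rho_sq PP_bounds by simp
  have c3: "2*(rho^2-rho) - (rho^2-rho-2*PP) \<ge> 0" using hr PP_bounds by simp
  have c4: "2*rho - (1-rho) \<ge> 0" using rho by simp
  have c5: "2*rho*(rho^2-rho) + PP*(1+rho) \<ge> 0" using hr PP_bounds rho by (intro add_nonneg_nonneg mult_nonneg_nonneg) auto
  have "0 \<le> ((rho^2-rho)^2 - PP*(PP+rho))*b^2 + (rho^2 - PP)*c^2
     + (2*(rho^2-rho) - (rho^2-rho-2*PP))*(a*b) + (2*rho - (1-rho))*(a*c) + (2*rho*(rho^2-rho) + PP*(1+rho))*(b*c)"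
    using c1 c2 c3 c4 c5 assms hr PP_bounds by (intro add_nonneg_nonneg mult_nonneg_nonneg) auto
  then show ?thesis using e by simp
qed



fun Minv :: "int \<times> int \<times> int \<Rightarrow> int \<times> int \<times> int" where
  "Minv (a,b,c) = (c-a-b, a, b)"

lemma M_Minv: "M (Minv w) = w"
  by (cases w) auto

lemma Minv_M: "Minv (M w) = w"
  by (cases w) auto

lemma Mpow_Minvpow: "(M^^j) ((Minv^^j) w) = w"
proof (induction j arbitrary: w)
  case 0 then show ?case by simp
next
  case (Suc j)
  have "(Minv^^Suc j) w = (Minv^^j) (Minv w)" by (simp add: funpow_swap1)
  then have "(M^^Suc j) ((Minv^^Suc j) w) = M ((M^^j) ((Minv^^j) (Minv w)))" by simp
  also have "\<dots> = w" using Suc by (simp add: M_Minv)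
  finally show ?case .
qed

lemma Minvpow_Mpow: "(Minv^^j) ((M^^j) w) = w"
proof (induction j arbitrary: w)
  case 0 then show ?case by simp
next
  case (Suc j)
  have "(M^^Suc j) w = (M^^j) (M w)" by (simp add: funpow_swap1)
  then have "(Minv^^Suc j) ((M^^Suc j) w) = Minv ((Minv^^j) ((M^^j) (M w)))" by simp
  also have "\<dots> = w" using Suc by (simp add: Minv_M)
  finally show ?case .
qed

fun rt :: "int \<times> int \<times> int \<Rightarrow> real \<times> real \<times> real" where
  "rt (a,b,c) = (of_int a, of_int b, of_int c)"

lemma rt_M: "rt (M w) = M (rt w)"
  by (cases w) auto

lemma rt_Mpow: "rt ((M^^j) w) = (M^^j) (rt w)"
  by (induction j) (auto simp: rt_M)

lemma lf_M: "lf (M w) = rho * lf w"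
  by (cases w) (simp only: lf_M3)

lemma qf_M: "rho * qf (M w) = qf w"
  by (cases w) (simp only: qf_M3)

lemma lf_Mpow: "lf ((M^^j) w) = rho^j * lf w"
  by (induction j) (auto simp: lf_M)

lemma qf_Mpow: "rho^j * qf ((M^^j) w) = qf w"
proof (induction j)
  case 0 then show ?case by simp
next
  case (Suc j)
  have "rho^Suc j * qf ((M^^Suc j) w) = rho^j * (rho * qf (M ((M^^j) w)))" by simp
  also have "\<dots> = qf w" using Suc by (simp only: qf_M)
  finally show ?case .
qed

definition win :: "int list \<Rightarrow> nat \<Rightarrow> int \<times> int \<times> int" where
  "win xs i = (xs!i, xs!(i+1), xs!(i+2))"

lemma trib_win: "is_tribonacci xs \<Longrightarrow> i+3 < length xs \<Longrightarrow> win xs (Suc i) = M (win xs i)"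
  unfolding is_tribonacci_def win_def
  by (auto dest!: spec[of _ "i+3"] simp: numeral_eq_Suc)

lemma trib_win_pow: "is_tribonacci xs \<Longrightarrow> j+3 \<le> length xs \<Longrightarrow> win xs j = (M^^j) (win xs 0)"
proof (induction j)
  case 0 then show ?case by simp
next
  case (Suc j)
  then show ?case using trib_win[of xs j] by simp
qed

fun fwd :: "int \<times> int \<times> int \<Rightarrow> nat \<Rightarrow> int list" where
  "fwd (a,b,c) 0 = [a,b,c]"
| "fwd (a,b,c) (Suc m) = a # fwd (b,c,a+b+c) m"

lemma fwd_length: "length (fwd w m) = m + 3"
  by (induction w m rule: fwd.induct) auto

lemma fwd_nth: "fwd (a,b,c) m ! 0 = a \<and> fwd (a,b,c) m ! 1 = b \<and> fwd (a,b,c) m ! 2 = c"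
proof (induction m arbitrary: a b c)
  case 0 then show ?case by simp
next
  case (Suc m)
  from Suc[of b c "a+b+c"] show ?case by (cases m) auto
qed

lemma fwd_last: "last (fwd w m) = snd (snd ((M^^m) w))"
proof (induction w m rule: fwd.induct)
  case (1 a b c) then show ?case by simp
next
  case (2 a b c m)
  have "fwd (b,c,a+b+c) m \<noteq> []" using fwd_length[of "(b,c,a+b+c)" m] by auto
  then have "last (fwd (a,b,c) (Suc m)) = last (fwd (b,c,a+b+c) m)" by simp
  also have "\<dots> = snd (snd ((M^^m) (b,c,a+b+c)))" using 2 .
  also have "\<dots> = snd (snd ((M^^Suc m) (a,b,c)))" by (simp add: funpow_Suc_right del: funpow.simps)
  finally show ?case .
qed

lemma trib_cons:
  assumes "is_tribonacci ys" "length ys \<ge> 3" "ys!2 = a + ys!0 + ys!1"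
  shows "is_tribonacci (a # ys)"
  unfolding is_tribonacci_def
proof (intro allI impI)
  fix i assume i: "3 \<le> i \<and> i < length (a # ys)"
  show "(a#ys) ! i = (a#ys) ! (i-1) + (a#ys) ! (i-2) + (a#ys) ! (i-3)"
  proof (cases "i = 3")
    case True then show ?thesis using assms(3) by (simp add: numeral_eq_Suc)
  next
    case False
    then obtain j where j: "i = Suc j" "3 \<le> j" "j < length ys" using i by (cases i) auto
    then have "ys ! j = ys ! (j-1) + ys ! (j-2) + ys ! (j-3)" using assms(1) unfolding is_tribonacci_def by auto
    moreover have "(a#ys) ! (i-1) = ys ! (j-1)" "(a#ys) ! (i-2) = ys ! (j-2)" "(a#ys) ! (i-3) = ys ! (j-3)"
      using j by (auto simp: nth_Cons' numeral_eq_Suc)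
    ultimately show ?thesis using j by simp
  qed
qed

lemma fwd_trib: "is_tribonacci (fwd w m)"
proof (induction w m rule: fwd.induct)
  case (1 a b c) then show ?case unfolding is_tribonacci_def by simp
next
  case (2 a b c m)
  show ?case unfolding fwd.simps
    by (rule trib_cons[OF 2]) (use fwd_length[of "(b,c,a+b+c)" m] fwd_nth[of b c "a+b+c" m] in auto)
qed

lemma trib_eq:
  assumes "is_tribonacci xs" "is_tribonacci ys" "length xs = length ys"
    "\<forall>i<3. i < length xs \<longrightarrow> xs!i = ys!i"
  shows "xs = ys"
proof (rule nth_equalityI[OF assms(3)])
  fix i show "i < length xs \<Longrightarrow> xs ! i = ys ! i"
  proof (induction i rule: less_induct)
    case (less i)
    show ?case
    proof (cases "i < 3")
      case True then show ?thesis using assms(4) less by auto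
    next
      case False
      then have "xs!i = xs!(i-1) + xs!(i-2) + xs!(i-3)" "ys!i = ys!(i-1) + ys!(i-2) + ys!(i-3)"
        using assms less.prems unfolding is_tribonacci_def by auto
      moreover have "xs!(i-1) = ys!(i-1)" "xs!(i-2) = ys!(i-2)" "xs!(i-3) = ys!(i-3)"
        using less False by auto
      ultimately show ?thesis by simp
    qed
  qed
qed

lemma pos_all:
  assumes "is_tribonacci xs" "is_positive_seq xs"
  shows "i < length xs \<Longrightarrow> xs!i > 0 \<and> (3 \<le> i \<longrightarrow> xs!i \<ge> int i)"
proof (induction i rule: less_induct)
  case (less i)
  show ?case
  proof (cases "i < 3")
    case True then show ?thesis using assms(2) less.prems unfolding is_positive_seq_def by auto
  next
    case False
    then have e: "xs!i = xs!(i-1) + xs!(i-2) + xs!(i-3)"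
      using assms less.prems unfolding is_tribonacci_def by auto
    have p: "xs!(i-1) > 0" "xs!(i-2) > 0" "xs!(i-3) > 0" using less False by auto
    have "xs!(i-1) \<ge> int i - 1 \<or> i = 3"
    proof (cases "i = 3")
      case False
      then have "xs!(i-1) \<ge> int (i-1)" using less.IH[of "i-1"] less.prems \<open>\<not> i < 3\<close> by auto
      then show ?thesis using \<open>\<not> i < 3\<close> by (simp add: of_nat_diff)
    qed simp
    then have "xs!i \<ge> int i" using e p False by auto
    then show ?thesis using e p by auto
  qed
qed



lemma PP_pos: "0 < PP" using PP_bounds by simp

lemma qf_end: "qf (v,u,nn) = qf (v - nn*PP^2, u - nn*PP, 0)"
proof -
  have "PP*(PP*(rho*rho)) = (PP*rho)*(PP*rho)" by (simp add: algebra_simps)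
  then have h: "PP*(PP*(rho*rho)) = 1" using PP_rho by simp
  have h2: "PP^2*rho = PP" using PP_rho by (simp add: power2_eq_square mult.assoc)
  have h3: "PP^2*rho^2 = 1" using h by (simp add: power2_eq_square mult.assoc)
  have p: "(v,u,nn) = ((v - nn*PP^2) + nn*PP^2, (u - nn*PP) + nn*PP^2*rho, nn*PP^2*rho^2)"
    using h2 h3 by (auto simp: mult.assoc)
  have "qf (v,u,nn) = qf ((v - nn*PP^2) + nn*PP^2, (u - nn*PP) + nn*PP^2*rho, nn*PP^2*rho^2)"
    using p by (rule arg_cong[of _ _ qf])
  also have "\<dots> = qf (v - nn*PP^2, u - nn*PP, 0)" by (rule qf_shift)
  finally show ?thesis .
qed

lemma num50: "(1+rho^2)^2*rho \<le> 50"
proof -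
  have "(1+rho^2)^2 \<le> 4.43^2" using rho_sq by (intro power_mono) auto
  then have "(1+rho^2)^2*rho \<le> 4.43^2 * 1.85" using rho by (intro mult_mono) auto
  then show ?thesis by (simp add: power2_eq_square)
qed

lemma main_k:
  fixes n :: int and k :: nat
  assumes n3: "n \<ge> 3" and k4: "k \<ge> 4" and empty: "pos_trib_ending n (k+1) = {}"
  shows "finite (pos_trib_ending n k) \<and> card (pos_trib_ending n k) \<le> 561001"
proof -
  define m where "m = k - 3"
  have m1: "m \<ge> 1" "k = m+3" using k4 unfolding m_def by auto
  define r1 where "r1 = real_of_int n * PP"
  define r2 where "r2 = real_of_int n * PP^2"
  define U where "U = \<lfloor>r1 + 1/2\<rfloor>"
  define V where "V = \<lfloor>r2 + 1/2\<rfloor>"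
  define E' where "E' = (V,U,n)"
  define W0 where "W0 = (Minv^^(m+1)) E'"
  have ME: "(M^^(m+1)) W0 = E'" unfolding W0_def by (rule Mpow_Minvpow)
  have npos: "real_of_int n > 0" using n3 by simp
  have r12: "r1 \<ge> 0" "r2 \<ge> 0" unfolding r1_def r2_def using npos PP_pos by auto
  have UV: "0 \<le> U" "0 \<le> V" "\<bar>U - r1\<bar> \<le> 1/2" "\<bar>V - r2\<bar> \<le> 1/2"
  proof -
    have "real_of_int U \<le> r1 + 1/2" "r1 + 1/2 < real_of_int U + 1"
      unfolding U_def by (rule of_int_floor_le, rule real_of_int_floor_add_one_gt)
    moreover have "real_of_int V \<le> r2 + 1/2" "r2 + 1/2 < real_of_int V + 1"
      unfolding V_def by (rule of_int_floor_le, rule real_of_int_floor_add_one_gt)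
    moreover have "0 \<le> U" "0 \<le> V" unfolding U_def V_def using r12 by auto
    ultimately show "0 \<le> U" "0 \<le> V" "\<bar>U - r1\<bar> \<le> 1/2" "\<bar>V - r2\<bar> \<le> 1/2"
      unfolding abs_le_iff by linarith+
  qed
  have notpos: "\<not> (fst W0 > 0 \<and> fst (snd W0) > 0 \<and> snd (snd W0) > 0)"
  proof
    assume pos: "fst W0 > 0 \<and> fst (snd W0) > 0 \<and> snd (snd W0) > 0"
    obtain a b c where abc: "W0 = (a,b,c)" by (cases W0) auto
    define xs where "xs = fwd (a,b,c) (m+1)"
    have "length xs = k+1" unfolding xs_def fwd_length using m1 by simp
    moreover have "is_tribonacci xs" unfolding xs_def by (rule fwd_trib)
    moreover have "is_positive_seq xs"
      unfolding is_positive_seq_def xs_def using fwd_nth[of a b c "m+1"] pos abc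
      by (auto simp: fwd_length less_Suc_eq numeral_eq_Suc)
    moreover have "terminates_at xs n"
      unfolding terminates_at_def xs_def using fwd_last[of "(a,b,c)" "m+1"] ME abc fwd_length[of "(a,b,c)" "m+1"]
      by (auto simp: E'_def)
    ultimately have "xs \<in> pos_trib_ending n (k+1)" unfolding pos_trib_ending_def by simp
    then show False using empty by simp
  qed
  define w0 where "w0 = rt W0"
  define e' where "e' = rt E'"
  have ew: "e' = (M^^(m+1)) w0" unfolding e'_def w0_def using ME rt_Mpow by metis
  have lfe': "lf e' = rho^(m+1) * lf w0" unfolding ew by (rule lf_Mpow)
  have qfe': "rho^(m+1) * qf e' = qf w0" unfolding ew by (rule qf_Mpow)
  have rpos: "0 < rho" using rho by simp
  have lfe'_ge: "rho * real_of_int n \<le> lf e'"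
  proof -
    have "0 \<le> (rho^2-rho)*real_of_int U" using UV rho rho_sq by (intro mult_nonneg_nonneg) auto
    then show ?thesis unfolding e'_def E'_def using UV by simp
  qed
  have "0 < rho * real_of_int n" using npos rpos by simp
  then have lfe'_pos: "0 < lf e'" using lfe'_ge by linarith
  have "0 < rho^(m+1)" using rpos by simp
  moreover have "0 < rho^(m+1) * lf w0" using lfe'_pos lfe' by simp
  ultimately have lfw0: "0 < lf w0" using zero_less_mult_pos by blast
  have w0np: "fst w0 \<le> 0 \<or> fst (snd w0) \<le> 0 \<or> snd (snd w0) \<le> 0"
    using notpos unfolding w0_def by (cases W0) auto
  have pl: "(lf w0)^2 \<le> 1000 * qf w0"
    using pos_lemma[of "fst w0" "fst (snd w0)" "snd (snd w0)"] lfw0 w0np by (cases w0) auto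
  have qfe'1: "qf e' \<le> 1"
  proof -
    have "qf e' = qf (real_of_int V - r2, real_of_int U - r1, 0)"
      unfolding e'_def E'_def r1_def r2_def by (simp only: rt.simps) (rule qf_end)
    also have "\<dots> \<le> 2*((real_of_int V - r2)^2 + (real_of_int U - r1)^2)" by (rule q2_upper)
    also have "\<dots> \<le> 2*((1/2)^2 + (1/2)^2)"
    proof -
      have "\<bar>real_of_int V - r2\<bar>^2 \<le> (1/2)^2" using UV(4) by (intro power_mono) auto
      moreover have "\<bar>real_of_int U - r1\<bar>^2 \<le> (1/2)^2" using UV(3) by (intro power_mono) auto
      ultimately show ?thesis by simp
    qed
    finally show ?thesis by (simp add: power2_eq_square)
  qed
  have key': "(lf e')^2 \<le> 1000 * rho^(3*m+3)"
  proof -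
    have "(lf e')^2 = (rho^(m+1))^2 * (lf w0)^2" unfolding lfe' by (simp add: power_mult_distrib)
    also have "\<dots> \<le> (rho^(m+1))^2 * (1000 * qf w0)" using pl by (intro mult_left_mono) auto
    also have "\<dots> = 1000 * (rho^(m+1))^3 * qf e'" unfolding qfe'[symmetric] by (simp add: power2_eq_square power3_eq_cube)
    also have "\<dots> \<le> 1000 * (rho^(m+1))^3 * 1" using qfe'1 rpos by (intro mult_left_mono) auto
    also have "\<dots> = 1000 * rho^(3*m+3)" by (simp add: power_mult[symmetric] power_add algebra_simps)
    finally show ?thesis .
  qed
  have bnd: "\<bar>real_of_int (xs!(m+1)) - r1\<bar> < 317 \<and> \<bar>real_of_int (xs!m) - r2\<bar> < 317"
    if xs: "xs \<in> pos_trib_ending n k" for xs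
  proof -
    have len: "length xs = m+3" and tr: "is_tribonacci xs" and ps: "is_positive_seq xs"
      and lst: "last xs = n" "xs \<noteq> []"
      using xs m1 unfolding pos_trib_ending_def terminates_at_def by auto
    have xn: "xs!(m+2) = n" using lst len by (simp add: last_conv_nth)
    have pa: "\<And>i. i < m+3 \<Longrightarrow> xs!i > 0" using pos_all[OF tr ps] len by auto
    have rec: "xs!(m+2) = xs!(m+1) + xs!m + xs!(m-1)"
      using tr len m1 unfolding is_tribonacci_def
      by (auto dest!: spec[of _ "m+2"] simp: numeral_eq_Suc)
    have uv: "0 < xs!m" "0 < xs!(m+1)" "xs!m \<le> n" "xs!(m+1) \<le> n"
    proof -
      have "xs!(m-1) > 0" "xs!m > 0" "xs!(m+1) > 0" using pa by auto
      then show "0 < xs!m" "0 < xs!(m+1)" "xs!m \<le> n" "xs!(m+1) \<le> n" using rec xn by linarith+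
    qed
    define S0 where "S0 = win xs 0"
    define E where "E = win xs m"
    have ES: "E = (M^^m) S0" unfolding E_def S0_def by (rule trib_win_pow[OF tr]) (simp add: len)
    define e where "e = rt E"
    define s0 where "s0 = rt S0"
    have es: "e = (M^^m) s0" unfolding e_def s0_def ES by (rule rt_Mpow)
    have lfe: "lf e = rho^m * lf s0" unfolding es by (rule lf_Mpow)
    have qfe: "rho^m * qf e = qf s0" unfolding es by (rule qf_Mpow)
    have s0pos: "qf s0 \<le> (lf s0)^2"
    proof -
      have "xs!0 > 0" "xs!1 > 0" "xs!2 > 0" using pa by auto
      then show ?thesis unfolding s0_def S0_def win_def rt.simps by (intro qf_le_lf) (auto simp: numeral_eq_Suc)
    qed
    have step1: "rho^(3*m) * qf e \<le> (lf e)^2"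
    proof -
      have "rho^(3*m) * qf e = rho^(2*m) * (rho^m * qf e)" by (simp add: power_add[symmetric] mult.assoc)
      also have "\<dots> \<le> rho^(2*m) * (lf s0)^2" unfolding qfe using s0pos rpos by (intro mult_left_mono) auto
      also have "\<dots> = (lf e)^2" unfolding lfe by (simp add: power_mult_distrib power_mult[symmetric] mult.commute)
      finally show ?thesis .
    qed
    have ee: "e = (real_of_int (xs!m), real_of_int (xs!(m+1)), real_of_int n)"
      unfolding e_def E_def win_def using xn by simp
    have lfe_le: "lf e \<le> (1+rho^2) * real_of_int n"
    proof -
      have "(rho^2-rho)*real_of_int (xs!(m+1)) \<le> (rho^2-rho)*real_of_int n"
        using uv rho rho_sq by (intro mult_left_mono) auto
      then show ?thesis unfolding ee using uv by (simp add: algebra_simps)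
    qed
    have lfe_pos: "0 \<le> lf e"
    proof -
      have "0 \<le> (rho^2-rho)*real_of_int (xs!(m+1))" using uv rho rho_sq by (intro mult_nonneg_nonneg) auto
      then show ?thesis unfolding ee using uv npos rpos by simp
    qed
    have "rho * lf e \<le> (1+rho^2) * (rho * real_of_int n)"
      using lfe_le rpos by (simp add: mult_left_mono mult.left_commute)
    also have "\<dots> \<le> (1+rho^2) * lf e'" using lfe'_ge by (intro mult_left_mono) auto
    finally have "(rho * lf e)^2 \<le> ((1+rho^2) * lf e')^2" using lfe_pos rpos by (intro power_mono) auto
    then have "rho^2 * (lf e)^2 \<le> (1+rho^2)^2 * (lf e')^2" by (simp add: power_mult_distrib)
    also have "\<dots> \<le> (1+rho^2)^2 * (1000 * rho^(3*m+3))" using key' by (intro mult_left_mono) auto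
    finally have A: "rho^2 * (lf e)^2 \<le> (1+rho^2)^2 * (1000 * rho^(3*m+3))" .
    have "rho^(3*m) * (rho^2 * qf e) = rho^2 * (rho^(3*m) * qf e)" by (simp only: mult.left_commute)
    also have "\<dots> \<le> rho^2 * (lf e)^2" using step1 by (intro mult_left_mono) auto
    also have "\<dots> \<le> (1+rho^2)^2 * (1000 * rho^(3*m+3))" by (rule A)
    also have "\<dots> = rho^(3*m) * (rho^2 * (1000*((1+rho^2)^2*rho)))"
      by (simp only: power_add power2_eq_square power3_eq_cube mult_ac)
    finally have X: "rho^(3*m) * (rho^2 * qf e) \<le> rho^(3*m) * (rho^2 * (1000*((1+rho^2)^2*rho)))" .
    have "rho^2 * qf e \<le> rho^2 * (1000*((1+rho^2)^2*rho))"
      by (rule mult_left_le_imp_le[OF X]) (use rpos in simp)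
    then have "qf e \<le> 1000*((1+rho^2)^2*rho)"
      by (rule mult_left_le_imp_le) (use rpos in simp)
    also have "\<dots> \<le> 1000 * 50" using num50 by (intro mult_left_mono) auto
    finally have q5: "qf e \<le> 50000" by simp
    have "qf e = qf (real_of_int (xs!m) - r2, real_of_int (xs!(m+1)) - r1, 0)"
      unfolding ee r1_def r2_def by (rule qf_end)
    then have "((real_of_int (xs!m) - r2)^2 + (real_of_int (xs!(m+1)) - r1)^2)/2 \<le> 50000"
      using q2_lower q5 by (metis order_trans)
    then have h50: "(real_of_int (xs!m) - r2)^2 / 2 + (real_of_int (xs!(m+1)) - r1)^2 / 2 \<le> 50000"
      by (simp only: add_divide_distrib)
    have z: "0 \<le> (real_of_int (xs!m) - r2)^2" "0 \<le> (real_of_int (xs!(m+1)) - r1)^2" by simp_all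
    have c: "(317::real)^2 = 100489" by simp
    have "(real_of_int (xs!m) - r2)^2 < 100489" using h50 z by linarith
    moreover have "(real_of_int (xs!(m+1)) - r1)^2 < 100489" using h50 z by linarith
    ultimately have sq: "\<bar>real_of_int (xs!m) - r2\<bar>^2 < 317^2" "\<bar>real_of_int (xs!(m+1)) - r1\<bar>^2 < 317^2"
      unfolding power2_abs c by simp_all
    have "\<bar>real_of_int (xs!m) - r2\<bar> < 317" by (rule power2_less_imp_less[OF sq(1)]) simp
    moreover have "\<bar>real_of_int (xs!(m+1)) - r1\<bar> < 317" by (rule power2_less_imp_less[OF sq(2)]) simp
    ultimately show ?thesis by simp
  qed
  define f where "f = (\<lambda>xs::int list. (xs!(m+1), xs!m))"
  define a1 where "a1 = \<lfloor>r1 - 317\<rfloor> + 1"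
  define a2 where "a2 = \<lfloor>r2 - 317\<rfloor> + 1"
  define B where "B = {a1..a1+633} \<times> {a2..a2+633}"
  have img: "f ` pos_trib_ending n k \<subseteq> B"
  proof
    fix p assume "p \<in> f ` pos_trib_ending n k"
    then obtain xs where xs: "xs \<in> pos_trib_ending n k" "p = (xs!(m+1), xs!m)" unfolding f_def by auto
    from bnd[OF xs(1)] have h: "\<bar>real_of_int (xs!(m+1)) - r1\<bar> < 317" "\<bar>real_of_int (xs!m) - r2\<bar> < 317" by auto
    have fl1: "real_of_int \<lfloor>r1 - 317\<rfloor> \<le> r1 - 317" "r1 - 317 < real_of_int \<lfloor>r1 - 317\<rfloor> + 1"
      by (rule of_int_floor_le, rule real_of_int_floor_add_one_gt)
    have fl2: "real_of_int \<lfloor>r2 - 317\<rfloor> \<le> r2 - 317" "r2 - 317 < real_of_int \<lfloor>r2 - 317\<rfloor> + 1"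
      by (rule of_int_floor_le, rule real_of_int_floor_add_one_gt)
    have "real_of_int \<lfloor>r1 - 317\<rfloor> < real_of_int (xs!(m+1))" "real_of_int (xs!(m+1)) < real_of_int \<lfloor>r1 - 317\<rfloor> + 635"
      using h(1) fl1 unfolding abs_less_iff by linarith+
    then have "\<lfloor>r1 - 317\<rfloor> < xs!(m+1)" "xs!(m+1) < \<lfloor>r1 - 317\<rfloor> + 635" by linarith+
    then have "xs!(m+1) \<in> {a1..a1+633}" unfolding a1_def by simp
    have "real_of_int \<lfloor>r2 - 317\<rfloor> < real_of_int (xs!m)" "real_of_int (xs!m) < real_of_int \<lfloor>r2 - 317\<rfloor> + 635"
      using h(2) fl2 unfolding abs_less_iff by linarith+
    then have "\<lfloor>r2 - 317\<rfloor> < xs!m" "xs!m < \<lfloor>r2 - 317\<rfloor> + 635" by linarith+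
    then have "xs!m \<in> {a2..a2+633}" unfolding a2_def by simp
    with \<open>xs!(m+1) \<in> {a1..a1+633}\<close> show "p \<in> B" unfolding B_def xs(2) by simp
  qed
  have inj: "inj_on f (pos_trib_ending n k)"
  proof (rule inj_onI)
    fix xs ys assume xs: "xs \<in> pos_trib_ending n k" and ys: "ys \<in> pos_trib_ending n k" and fe: "f xs = f ys"
    have lx: "length xs = m+3" "is_tribonacci xs" "last xs = n" "xs \<noteq> []"
      using xs m1 unfolding pos_trib_ending_def terminates_at_def by auto
    have ly: "length ys = m+3" "is_tribonacci ys" "last ys = n" "ys \<noteq> []"
      using ys m1 unfolding pos_trib_ending_def terminates_at_def by auto
    have "xs!(m+2) = ys!(m+2)" using lx ly by (simp add: last_conv_nth)
    then have wm: "win xs m = win ys m" using fe unfolding win_def f_def by simp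
    have "win xs 0 = (Minv^^m) (win xs m)" using trib_win_pow[OF lx(2), of m] lx(1) by (simp add: Minvpow_Mpow)
    also have "\<dots> = (Minv^^m) (win ys m)" using wm by simp
    also have "\<dots> = win ys 0" using trib_win_pow[OF ly(2), of m] ly(1) by (simp add: Minvpow_Mpow)
    finally have w0: "win xs 0 = win ys 0" .
    show "xs = ys"
    proof (rule trib_eq[OF lx(2) ly(2)])
      show "length xs = length ys" using lx ly by simp
      show "\<forall>i<3. i < length xs \<longrightarrow> xs ! i = ys ! i"
        using w0 unfolding win_def by (auto simp: less_Suc_eq numeral_eq_Suc)
    qed
  qed
  have finB: "finite B" unfolding B_def by simp
  have cardB: "card B = 634 * 634" unfolding B_def by (simp add: card_cartesian_product)
  have "finite (pos_trib_ending n k)" using inj_on_finite[OF inj img finB] .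
  moreover have "card (pos_trib_ending n k) \<le> card B" using card_inj_on_le[OF inj img finB] .
  ultimately show ?thesis using cardB by simp
qed



theorem theorem1:
  fixes n :: int
  assumes "n \<ge> 3"
  shows "finite (pos_trib_ending n (t n)) \<and> card (pos_trib_ending n (t n)) \<le> 561001"
proof -
  define P where "P = (\<lambda>k. k > 0 \<and> pos_trib_ending n k \<noteq> {})"
  have tdef: "t n = Greatest P" unfolding t_def P_def by simp
  have ex4: "[1,1,n-2,n] \<in> pos_trib_ending n 4"
    unfolding pos_trib_ending_def is_tribonacci_def is_positive_seq_def terminates_at_def
    using assms by (auto simp: less_Suc_eq numeral_eq_Suc)
  have P4: "P 4" unfolding P_def using ex4 by auto
  have bound: "\<forall>y. P y \<longrightarrow> y \<le> nat n + 4"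
  proof (intro allI impI)
    fix y assume "P y"
    then obtain xs where xs: "xs \<in> pos_trib_ending n y" unfolding P_def by auto
    show "y \<le> nat n + 4"
    proof (cases "y \<le> 4")
      case False
      have len: "length xs = y" and tr: "is_tribonacci xs" and ps: "is_positive_seq xs"
        and lst: "last xs = n" "xs \<noteq> []"
        using xs unfolding pos_trib_ending_def terminates_at_def by auto
      have "xs!(y-1) \<ge> int (y-1)" using pos_all[OF tr ps, of "y-1"] len False by auto
      moreover have "xs!(y-1) = n" using lst len by (simp add: last_conv_nth)
      ultimately show ?thesis by linarith
    qed simp
  qed
  have Pt: "P (t n)" unfolding tdef by (rule GreatestI_nat[of P 4 "nat n + 4", OF P4 bound[rule_format]])
  have t4: "4 \<le> t n" unfolding tdef by (rule Greatest_le_nat[of P 4 "nat n + 4", OF P4 bound[rule_format]])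
  have empty: "pos_trib_ending n (t n + 1) = {}"
  proof (rule ccontr)
    assume "pos_trib_ending n (t n + 1) \<noteq> {}"
    then have "P (t n + 1)" unfolding P_def by simp
    then have "t n + 1 \<le> t n" unfolding tdef by (rule Greatest_le_nat[of P _ "nat n + 4", OF _ bound[rule_format]])
    then show False by simp
  qed
  show ?thesis by (rule main_k[OF assms t4 empty])
qed

end
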